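(* For every integer $r\ge 1$, the set $R_r$ is high above the set $L_r$.
   Context: Define finite sets $P_r\subset\mathbb{Z}^2$ for integers $r\ge 0$ recursively: $P_0:=\{(0,0)\}$; for $r\ge 1$, $L_r:=P_{r-1}$, $R_r:=\{(x+\delta_r,\,y+\delta_r'):(x,y)\in L_r\}$ and $P_r:=L_r\cup R_r$, where $\delta_r:=3\cdot 4^{r-1}$ and $\delta_r':=(3r+1)\cdot 4^{r-1}$. For finite point sets $X,Y$ in the plane, $X$ is said to be high above $Y$ if every line determined by two points of $X$ lies strictly above every point of $Y$, and every line determined by two points of $Y$ lies strictly below every point of $X$ (the conditions are vacuous when the respective set has fewer than two points). *)

theory Defs
  imports Main
begin

type_synonym pt = "int \<times> int"

definition delta :: "nat \<Rightarrow> int" where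
  "delta r = 3 * 4 ^ (r - 1)"

definition delta' :: "nat \<Rightarrow> int" where
  "delta' r = (3 * int r + 1) * 4 ^ (r - 1)"

definition shift :: "int \<Rightarrow> int \<Rightarrow> pt set \<Rightarrow> pt set" where
  "shift dx dy S = (\<lambda>(x, y). (x + dx, y + dy)) ` S"

fun P :: "nat \<Rightarrow> pt set" where
  "P 0 = {(0, 0)}"
| "P (Suc r) = P r \<union> shift (delta (Suc r)) (delta' (Suc r)) (P r)"

definition L :: "nat \<Rightarrow> pt set" where
  "L r = P (r - 1)"

definition R :: "nat \<Rightarrow> pt set" where
  "R r = shift (delta r) (delta' r) (L r)"

definition line_above :: "pt \<Rightarrow> pt \<Rightarrow> pt \<Rightarrow> bool" where
  "line_above a b q \<longleftrightarrow> fst a \<noteq> fst b \<and>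
     (let (a, b) = (if fst a < fst b then (a, b) else (b, a)) in
        (fst b - fst a) * (snd q - snd a) < (snd b - snd a) * (fst q - fst a))"

definition line_below :: "pt \<Rightarrow> pt \<Rightarrow> pt \<Rightarrow> bool" where
  "line_below a b q \<longleftrightarrow> fst a \<noteq> fst b \<and>
     (let (a, b) = (if fst a < fst b then (a, b) else (b, a)) in
        (fst b - fst a) * (snd q - snd a) > (snd b - snd a) * (fst q - fst a))"

definition high_above :: "pt set \<Rightarrow> pt set \<Rightarrow> bool" where
  "high_above X Y \<longleftrightarrow>
     (\<forall>a\<in>X. \<forall>b\<in>X. a \<noteq> b \<longrightarrow> (\<forall>q\<in>Y. line_above a b q)) \<and>
     (\<forall>a\<in>Y. \<forall>b\<in>Y. a \<noteq> b \<longrightarrow> (\<forall>q\<in>X. line_below a b q))"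

end

theory Submission
  imports Defs
begin

definition g :: "nat \<Rightarrow> pt \<Rightarrow> int" where
  "g r p = snd p - int r * fst p"

lemma shift_mem: "q \<in> shift dx dy S \<longleftrightarrow> (\<exists>p\<in>S. q = (fst p + dx, snd p + dy))"
  unfolding shift_def by force

lemma delta_Suc: "delta (Suc k) = 3 * 4 ^ k" by (simp add: delta_def)
lemma delta'_Suc: "delta' (Suc k) = (3 * int k + 4) * 4 ^ k" by (simp add: delta'_def algebra_simps)

lemma P_Suc_mem: "q \<in> P (Suc k) \<longleftrightarrow> q \<in> P k \<or> (\<exists>p\<in>P k. q = (fst p + 3 * 4 ^ k, snd p + (3 * int k + 4) * 4 ^ k))"
  by (simp add: shift_mem delta_Suc delta'_Suc)

lemma P_x: "p \<in> P k \<Longrightarrow> 0 \<le> fst p \<and> fst p < 4 ^ k"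
proof (induction k arbitrary: p)
  case 0 then show ?case by simp
next
  case (Suc k)
  from Suc.prems show ?case unfolding P_Suc_mem
  proof
    assume "p \<in> P k" then show ?thesis using Suc.IH[of p] by simp
  next
    assume "\<exists>q\<in>P k. p = (fst q + 3 * 4 ^ k, snd q + (3 * int k + 4) * 4 ^ k)"
    then obtain q where "q \<in> P k" "p = (fst q + 3 * 4 ^ k, snd q + (3 * int k + 4) * 4 ^ k)" by blast
    then show ?thesis using Suc.IH[of q] by simp
  qed
qed

lemma P_inj: "p \<in> P k \<Longrightarrow> q \<in> P k \<Longrightarrow> fst p = fst q \<Longrightarrow> p = q"
proof (induction k arbitrary: p q)
  case 0 then show ?case by simp
next
  case (Suc k)
  note IH = Suc.IH
  from Suc.prems(1) obtain p' where p': "p' \<in> P k" "p = p' \<or> p = (fst p' + 3 * 4 ^ k, snd p' + (3 * int k + 4) * 4 ^ k)"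
    unfolding P_Suc_mem by blast
  from Suc.prems(2) obtain q' where q': "q' \<in> P k" "q = q' \<or> q = (fst q' + 3 * 4 ^ k, snd q' + (3 * int k + 4) * 4 ^ k)"
    unfolding P_Suc_mem by blast
  have bp: "0 \<le> fst p' \<and> fst p' < 4 ^ k" "0 \<le> fst q' \<and> fst q' < 4 ^ k" using P_x p'(1) q'(1) by auto
  show ?case using p'(2) q'(2) Suc.prems(3) IH[OF p'(1) q'(1)] bp
    by (auto simp: prod_eq_iff)
qed

lemma P_g: "k < r \<Longrightarrow> p \<in> P k \<Longrightarrow> -(int r - int k) * 4 ^ k < g r p \<and> g r p \<le> 0"
proof (induction k arbitrary: p)
  case 0 then show ?case by (simp add: g_def)
next
  case (Suc k)
  from Suc.prems(2) show ?case unfolding P_Suc_mem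
  proof
    assume "p \<in> P k"
    then have h: "-(int r - int k) * 4 ^ k < g r p \<and> g r p \<le> 0" using Suc by simp
    have "-(int r - int (Suc k)) * 4 ^ Suc k \<le> -(int r - int k) * 4 ^ k"
    proof -
      have "(int r - int k) * 4 ^ k \<le> (int r - int (Suc k)) * 4 ^ Suc k"
      proof -
        have "(int r - int k) * 4 ^ k \<le> (4 * (int r - int (Suc k))) * 4 ^ k"
          using Suc.prems(1) by (intro mult_right_mono) auto
        then show ?thesis by (simp add: algebra_simps)
      qed
      then show ?thesis by simp
    qed
    then show ?thesis using h by linarith
  next
    assume "\<exists>q\<in>P k. p = (fst q + 3 * 4 ^ k, snd q + (3 * int k + 4) * 4 ^ k)"
    then obtain q where q: "q \<in> P k" "p = (fst q + 3 * 4 ^ k, snd q + (3 * int k + 4) * 4 ^ k)" by blast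
    have h: "-(int r - int k) * 4 ^ k < g r q \<and> g r q \<le> 0" using Suc q by simp
    have e: "g r p = g r q + (3 * int k + 4 - 3 * int r) * 4 ^ k"
      using q(2) by (simp add: g_def algebra_simps)
    have c: "(3 * int k + 4 - 3 * int r) * 4 ^ k \<le> 0"
      using Suc.prems(1) by (intro mult_nonpos_nonneg) auto
    have d: "-(int r - int (Suc k)) * 4 ^ Suc k = -(int r - int k) * 4 ^ k + (3 * int k + 4 - 3 * int r) * 4 ^ k"
      by (simp add: algebra_simps)
    show ?thesis using h e c d by linarith
  qed
qed

lemma P_ord: "k < r \<Longrightarrow> a \<in> P k \<Longrightarrow> b \<in> P k \<Longrightarrow> fst a < fst b \<Longrightarrow> g r b < g r a"
proof (induction k arbitrary: a b)
  case 0 then show ?case by simp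
next
  case (Suc k)
  note IH = Suc.IH
  let ?D = "\<lambda>p::pt. (fst p + 3 * 4 ^ k, snd p + (3 * int k + 4) * 4 ^ k)"
  have gD: "g r (?D p) = g r p + (3 * int k + 4 - 3 * int r) * 4 ^ k" for p
    by (simp add: g_def algebra_simps)
  from Suc.prems(2) obtain a' where a': "a' \<in> P k" "a = a' \<or> a = ?D a'"
    unfolding P_Suc_mem by blast
  from Suc.prems(3) obtain b' where b': "b' \<in> P k" "b = b' \<or> b = ?D b'"
    unfolding P_Suc_mem by blast
  have bx: "0 \<le> fst a' \<and> fst a' < 4 ^ k" "0 \<le> fst b' \<and> fst b' < 4 ^ k" using P_x a'(1) b'(1) by auto
  have ga: "-(int r - int k) * 4 ^ k < g r a' \<and> g r a' \<le> 0" using P_g[of k r a'] a'(1) Suc.prems(1) by simp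
  have gb: "-(int r - int k) * 4 ^ k < g r b' \<and> g r b' \<le> 0" using P_g[of k r b'] b'(1) Suc.prems(1) by simp
  have c: "(3 * int k + 4 - 3 * int r) * 4 ^ k \<le> -(int r - int k) * 4 ^ k"
    using Suc.prems(1) by (intro mult_right_mono) auto
  show ?case
  proof (cases "a = a'")
    case True
    show ?thesis
    proof (cases "b = b'")
      case True
      then show ?thesis using \<open>a = a'\<close> IH[of a' b'] a' b' Suc.prems by simp
    next
      case False
      then have "b = ?D b'" using b' by blast
      then have "g r b = g r b' + (3 * int k + 4 - 3 * int r) * 4 ^ k" using gD[of b'] by simp
      moreover have "g r a = g r a'" using \<open>a = a'\<close> by simp
      ultimately show ?thesis using ga gb c by linarith
    qed
  next
    case False
    then have ea: "a = ?D a'" using a' by blast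
    show ?thesis
    proof (cases "b = b'")
      case True
      then show ?thesis using ea Suc.prems(4) bx by simp
    next
      case False
      then have "b = ?D b'" using b' by blast
      then show ?thesis using ea gD[of a'] gD[of b'] IH[of a' b'] a' b' Suc.prems by simp
    qed
  qed
qed

lemma key_above:
  fixes u v dx dy :: int and rr :: int
  assumes "0 < u" "v < rr * u" "dy < rr * dx" "dx < 0"
  shows "u * dy < v * dx"
proof -
  have "u * dy < u * (rr * dx)" using assms by (intro mult_strict_left_mono) auto
  also have "u * (rr * dx) = (rr * u) * dx" by (simp add: algebra_simps)
  also have "\<dots> < v * dx" using assms by (intro mult_strict_right_mono_neg) auto
  finally show ?thesis .
qed

lemma key_below:
  fixes u v dx dy :: int and rr :: int
  assumes "0 < u" "v < rr * u" "dy > rr * dx" "dx > 0"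
  shows "u * dy > v * dx"
proof -
  have "v * dx < (rr * u) * dx" using assms by (intro mult_strict_right_mono) auto
  also have "\<dots> = u * (rr * dx)" by (simp add: algebra_simps)
  also have "\<dots> < u * dy" using assms by (intro mult_strict_left_mono) auto
  finally show ?thesis .
qed

theorem lemma4:
  fixes r :: nat
  assumes "r \<ge> 1"
  shows "high_above (R r) (L r)"
proof -
  obtain k where rk: "r = Suc k" using assms by (cases r) auto
  let ?D = "\<lambda>p::pt. (fst p + 3 * 4 ^ k, snd p + (3 * int k + 4) * 4 ^ k)"
  have Lr: "L r = P k" using rk by (simp add: L_def)
  have Rr: "x \<in> R r \<longleftrightarrow> (\<exists>p\<in>P k. x = ?D p)" for x
    using rk by (simp add: R_def L_def shift_mem delta_Suc delta'_Suc)
  have kr: "k < r" using rk by simp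
  have gD: "g r (?D p) = g r p + 4 ^ k" for p
    using rk by (simp add: g_def algebra_simps)
  have cross: "g r a - g r q > - (4 ^ k)" if "a \<in> P k" "q \<in> P k" for a q
    using P_g[OF kr that(1)] P_g[OF kr that(2)] rk by simp
  have A: "(fst b - fst a) * (snd q - snd a) < (snd b - snd a) * (fst q - fst a)"
    if "a \<in> R r" "b \<in> R r" "fst a < fst b" "q \<in> P k" for a b q
  proof -
    obtain a' where a': "a' \<in> P k" "a = ?D a'" using \<open>a \<in> R r\<close> Rr[of a] by blast
    obtain b' where b': "b' \<in> P k" "b = ?D b'" using \<open>b \<in> R r\<close> Rr[of b] by blast
    have e1: "fst b - fst a = fst b' - fst a'" "snd b - snd a = snd b' - snd a'"
      using a'(2) b'(2) by simp_all
    have e2: "fst q - fst a = fst q - fst a' - 3 * 4 ^ k" "snd q - snd a = snd q - snd a' - (3 * int k + 4) * 4 ^ k"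
      using a'(2) by simp_all
    have o: "g r b' < g r a'" using P_ord[OF kr a'(1) b'(1)] that(3) e1 by linarith
    have c: "g r a' - g r q > - (4 ^ k)" using cross a'(1) that(4) by blast
    have qx: "fst q < 4 ^ k" "0 \<le> fst a'" using P_x[OF that(4)] P_x[OF a'(1)] by auto
    show ?thesis
    proof (rule key_above[where rr = "int r"])
      show "0 < fst b - fst a" using that by simp
      show "snd b - snd a < int r * (fst b - fst a)"
        using o unfolding e1 g_def by (simp add: right_diff_distrib)
      have X: "int r * (fst q - fst a) = int r * fst q - int r * fst a' - ((3 * int k + 4) * 4 ^ k - 4 ^ k)"
        using a'(2) rk by (simp add: algebra_simps)
      have c': "snd a' - int r * fst a' - (snd q - int r * fst q) > -(4 ^ k)" using c by (simp add: g_def)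
      show "snd q - snd a < int r * (fst q - fst a)"
        using c' X e2(2) by linarith
      have "(0::int) < 4 ^ k" by simp
      then show "fst q - fst a < 0" using qx e2 by linarith
    qed
  qed
  have B: "(fst b - fst a) * (snd q - snd a) > (snd b - snd a) * (fst q - fst a)"
    if "a \<in> P k" "b \<in> P k" "fst a < fst b" "q \<in> R r" for a b q
  proof -
    obtain q' where q': "q' \<in> P k" "q = ?D q'" using \<open>q \<in> R r\<close> Rr[of q] by blast
    have o: "g r b < g r a" using P_ord[OF kr that(1,2,3)] .
    have c: "g r q' - g r a > - (4 ^ k)" using cross q'(1) that(1) by blast
    have qx: "fst a < 4 ^ k" "0 \<le> fst q'" using P_x[OF that(1)] P_x[OF q'(1)] by auto
    have e2: "fst q - fst a = fst q' - fst a + 3 * 4 ^ k" "snd q - snd a = snd q' - snd a + (3 * int k + 4) * 4 ^ k"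
      using q'(2) by simp_all
    show ?thesis
    proof (rule key_below[where rr = "int r"])
      show "0 < fst b - fst a" using that by simp
      show "snd b - snd a < int r * (fst b - fst a)"
        using o unfolding g_def by (simp add: right_diff_distrib)
      have X: "int r * (fst q - fst a) = int r * fst q' - int r * fst a + ((3 * int k + 4) * 4 ^ k - 4 ^ k)"
        using q'(2) rk by (simp add: algebra_simps)
      have c': "snd q' - int r * fst q' - (snd a - int r * fst a) > -(4 ^ k)" using c by (simp add: g_def)
      show "snd q - snd a > int r * (fst q - fst a)"
        using c' X e2(2) by linarith
      have "(0::int) < 4 ^ k" by simp
      then show "fst q - fst a > 0" using qx e2 by linarith
    qed
  qed
  have injR: "fst a \<noteq> fst b" if "a \<in> R r" "b \<in> R r" "a \<noteq> b" for a b
  proof -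
    obtain a' where a': "a' \<in> P k" "a = ?D a'" using \<open>a \<in> R r\<close> Rr[of a] by blast
    obtain b' where b': "b' \<in> P k" "b = ?D b'" using \<open>b \<in> R r\<close> Rr[of b] by blast
    show ?thesis using P_inj[OF a'(1) b'(1)] a' b' that(3) by auto
  qed
  have injL: "fst a \<noteq> fst b" if "a \<in> P k" "b \<in> P k" "a \<noteq> b" for a b
    using P_inj that by blast
  show ?thesis
    unfolding high_above_def line_above_def line_below_def Lr
  proof (rule conjI; intro ballI impI)
    fix a b q assume h: "a \<in> R r" "b \<in> R r" "a \<noteq> b" "q \<in> P k"
    have ne: "fst a \<noteq> fst b" using injR h by blast
    show "fst a \<noteq> fst b \<and> (let (a, b) = if fst a < fst b then (a, b) else (b, a)
          in (fst b - fst a) * (snd q - snd a) < (snd b - snd a) * (fst q - fst a))"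
    proof (cases "fst a < fst b")
      case True then show ?thesis using A[OF h(1,2) True h(4)] ne by simp
    next
      case False then have "fst b < fst a" using ne by simp
      then show ?thesis using A[OF h(2,1) _ h(4)] ne False by simp
    qed
  next
    fix a b q assume h: "a \<in> P k" "b \<in> P k" "a \<noteq> b" "q \<in> R r"
    have ne: "fst a \<noteq> fst b" using injL h by blast
    show "fst a \<noteq> fst b \<and> (let (a, b) = if fst a < fst b then (a, b) else (b, a)
          in (fst b - fst a) * (snd q - snd a) > (snd b - snd a) * (fst q - fst a))"
    proof (cases "fst a < fst b")
      case True then show ?thesis using B[OF h(1,2) True h(4)] ne by simp
    next
      case False then have "fst b < fst a" using ne by simp
      then show ?thesis using B[OF h(2,1) _ h(4)] ne False by simp
    qed
  qed
qed

end
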